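(* Let $n\ge5$ and let $R\in\mathcal C_{1,0}$. Then $R$ lies in the PIC2 cone. Moreover, if $\mathrm{Ric}(R)(v,v)=0$ for some unit vector $v\in\mathbb{R}^n$, then $R=c\,(\mathrm{id}-2\,v\otimes v)\odot\mathrm{id}$ for some constant $c\ge0$ (i.e. either $R=0$ or $R$ is the curvature tensor of a round cylinder $S^{n-1}\times\mathbb{R}$ with axis $v$).
   Context: An algebraic curvature tensor on $\mathbb{R}^n$ is a tensor $R=(R_{ijkl})$ with $R_{ijkl}=-R_{jikl}=R_{klij}$ and $R_{ijkl}+R_{jkil}+R_{kijl}=0$; the unit round sphere has $R_{ijkl}=\delta_{ik}\delta_{jl}-\delta_{il}\delta_{jk}$. We write $\mathrm{Ric}(R)_{ik}=\sum_j R_{ijkj}$, $\mathrm{scal}(R)=\sum_i\mathrm{Ric}(R)_{ii}$, $\mathrm{Ric}_0(R)=\mathrm{Ric}(R)-\frac1n\mathrm{scal}(R)\,\mathrm{id}$. For symmetric bilinear forms $A,B$, $(A\odot B)_{ijkl}=A_{ik}B_{jl}-A_{il}B_{jk}-A_{jk}B_{il}+A_{jl}B_{ik}$; $\mathrm{id}=(\delta_{ij})$. The PIC2 cone is the set of algebraic curvature tensors $R$ with $R(z,w,\bar z,\bar w)\ge0$ for all $z,w\in\mathbb{C}^n$ ($R$ extended complex-multilinearly). For $\sigma\in(0,2]$ and $\theta\ge0$, $\mathcal{C}_{\sigma,\theta}$ denotes the set of algebraic curvature tensors $R$ that can be written $R=S+H\odot\mathrm{id}$, where $S$ is an algebraic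 curvature tensor in the PIC2 cone with $\mathrm{Ric}_0(S)=0$ and $H$ is a symmetric bilinear form with $\mathrm{tr}(H)\,\mathrm{id}-(n-2\sigma)H$ positive semidefinite and $\mathrm{tr}(H)-\theta\,\mathrm{scal}(S)\ge0$. *)

theory Defs
  imports Complex_Main "HOL-Library.Cardinality"
begin

text \<open>Tensors on R^n are indexed by a finite type 'n (n = CARD('n)).
  A 4-tensor is a function 'n => 'n => 'n => 'n => real, a bilinear form
  is 'n => 'n => real, a vector is 'n => real.\<close>

type_synonym 'n tensor4 = "'n \<Rightarrow> 'n \<Rightarrow> 'n \<Rightarrow> 'n \<Rightarrow> real"
type_synonym 'n bilin = "'n \<Rightarrow> 'n \<Rightarrow> real"

definition alg_curv :: "('n::finite) tensor4 \<Rightarrow> bool" where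
  "alg_curv R \<longleftrightarrow>
     (\<forall>i j k l. R i j k l = - R j i k l) \<and>
     (\<forall>i j k l. R i j k l = R k l i j) \<and>
     (\<forall>i j k l. R i j k l + R j k i l + R k i j l = 0)"

definition kd :: "'n \<Rightarrow> 'n \<Rightarrow> real" where
  "kd i j = (if i = j then 1 else 0)"

definition idf :: "('n::finite) bilin" where
  "idf = kd"

definition Ric :: "('n::finite) tensor4 \<Rightarrow> 'n bilin" where
  "Ric R = (\<lambda>i k. \<Sum>j\<in>UNIV. R i j k j)"

definition scal :: "('n::finite) tensor4 \<Rightarrow> real" where
  "scal R = (\<Sum>i\<in>UNIV. Ric R i i)"

definition Ric0 :: "('n::finite) tensor4 \<Rightarrow> 'n bilin" where
  "Ric0 R = (\<lambda>i k. Ric R i k - scal R / real (card (UNIV::'n set)) * idf i k)"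

definition KN :: "('n::finite) bilin \<Rightarrow> 'n bilin \<Rightarrow> 'n tensor4" (infixl "\<odot>" 70) where
  "A \<odot> B = (\<lambda>i j k l. A i k * B j l - A i l * B j k - A j k * B i l + A j l * B i k)"

definition tr :: "('n::finite) bilin \<Rightarrow> real" where
  "tr A = (\<Sum>i\<in>UNIV. A i i)"

definition sym_form :: "('n::finite) bilin \<Rightarrow> bool" where
  "sym_form A \<longleftrightarrow> (\<forall>i j. A i j = A j i)"

definition psd :: "('n::finite) bilin \<Rightarrow> bool" where
  "psd A \<longleftrightarrow> (\<forall>x::'n \<Rightarrow> real. (\<Sum>i\<in>UNIV. \<Sum>j\<in>UNIV. A i j * x i * x j) \<ge> 0)"

text \<open>Complex-multilinear extension R(z,w,conj z,conj w). For algebraic curvature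
  tensors this value is automatically real; PIC2 asks it to be nonnegative.\<close>
definition curv_cx :: "('n::finite) tensor4 \<Rightarrow> ('n \<Rightarrow> complex) \<Rightarrow> ('n \<Rightarrow> complex) \<Rightarrow> complex" where
  "curv_cx R z w = (\<Sum>i\<in>UNIV. \<Sum>j\<in>UNIV. \<Sum>k\<in>UNIV. \<Sum>l\<in>UNIV.
      complex_of_real (R i j k l) * z i * w j * cnj (z k) * cnj (w l))"

definition PIC2 :: "('n::finite) tensor4 set" where
  "PIC2 = {R. alg_curv R \<and>
     (\<forall>z w. Im (curv_cx R z w) = 0 \<and> Re (curv_cx R z w) \<ge> 0)}"

definition C_cone :: "real \<Rightarrow> real \<Rightarrow> ('n::finite) tensor4 set" where
  "C_cone \<sigma> \<theta> = {R. \<exists>S H. alg_curv S \<and> S \<in> PIC2 \<and> Ric0 S = (\<lambda>i k. 0) \<and>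
       sym_form H \<and>
       psd (\<lambda>i j. tr H * idf i j - (real (card (UNIV::'n set)) - 2 * \<sigma>) * H i j) \<and>
       tr H - \<theta> * scal S \<ge> 0 \<and>
       R = (\<lambda>i j k l. S i j k l + (H \<odot> idf) i j k l)}"

end

theory Submission
  imports Defs
begin


lemma ckd: "complex_of_real (kd a b) = (if a = b then 1 else 0)" by (simp add: kd_def)
lemma if01: "(if P then 1 else 0) * (x::complex) = (if P then x else 0)" by simp

definition ipc :: "('n::finite \<Rightarrow> complex) \<Rightarrow> ('n \<Rightarrow> complex) \<Rightarrow> complex" where
  "ipc a b = (\<Sum>j\<in>UNIV. a j * cnj (b j))"

definition Gm :: "('n::finite \<Rightarrow> complex) \<Rightarrow> ('n \<Rightarrow> complex) \<Rightarrow> 'n \<Rightarrow> 'n \<Rightarrow> complex" where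
  "Gm z w i k = ipc w w * z i * cnj (z k) - ipc w z * z i * cnj (w k)
      - ipc z w * w i * cnj (z k) + ipc z z * w i * cnj (w k)"

lemma curv_cx_add: "curv_cx (\<lambda>i j k l. A i j k l + B i j k l) z w = curv_cx A z w + curv_cx B z w"
  unfolding curv_cx_def by (simp add: distrib_left distrib_right sum.distrib)
lemma curv_cx_diff: "curv_cx (\<lambda>i j k l. A i j k l - B i j k l) z w = curv_cx A z w - curv_cx B z w"
  unfolding curv_cx_def by (simp add: left_diff_distrib right_diff_distrib sum_subtractf)

lemma piece1:
  fixes H :: "('n::finite) bilin" and z w :: "'n \<Rightarrow> complex"
  shows "curv_cx (\<lambda>i j k l. H i k * kd j l) z w =
    (\<Sum>i\<in>UNIV. \<Sum>k\<in>UNIV. of_real (H i k) * (ipc w w * z i * cnj (z k)))"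
proof -
  have "curv_cx (\<lambda>i j k l. H i k * kd j l) z w = (\<Sum>i\<in>UNIV. \<Sum>j\<in>UNIV. \<Sum>k\<in>UNIV. \<Sum>l\<in>UNIV.
     (if j = l then 1 else 0) * (of_real (H i k) * z i * w j * cnj (z k) * cnj (w l)))"
    unfolding curv_cx_def by (simp add: ckd mult_ac)
  also have "\<dots> = (\<Sum>i\<in>UNIV. \<Sum>j\<in>UNIV. \<Sum>k\<in>UNIV. of_real (H i k) * z i * w j * cnj (z k) * cnj (w j))"
    by (simp only: if01) simp
  also have "\<dots> = (\<Sum>i\<in>UNIV. \<Sum>k\<in>UNIV. \<Sum>j\<in>UNIV. of_real (H i k) * z i * w j * cnj (z k) * cnj (w j))"
    by (rule sum.cong[OF refl], rule sum.swap)
  also have "\<dots> = (\<Sum>i\<in>UNIV. \<Sum>k\<in>UNIV. of_real (H i k) * (ipc w w * z i * cnj (z k)))"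
    by (simp add: ipc_def sum_distrib_left sum_distrib_right mult_ac)
  finally show ?thesis .
qed

lemma piece2:
  fixes H :: "('n::finite) bilin" and z w :: "'n \<Rightarrow> complex"
  shows "curv_cx (\<lambda>i j k l. H i l * kd j k) z w =
    (\<Sum>i\<in>UNIV. \<Sum>k\<in>UNIV. of_real (H i k) * (ipc w z * z i * cnj (w k)))"
proof -
  have "curv_cx (\<lambda>i j k l. H i l * kd j k) z w = (\<Sum>i\<in>UNIV. \<Sum>j\<in>UNIV. \<Sum>k\<in>UNIV. \<Sum>l\<in>UNIV.
     (if j = k then 1 else 0) * (of_real (H i l) * z i * w j * cnj (z k) * cnj (w l)))"
    unfolding curv_cx_def by (simp add: ckd mult_ac)
  also have "\<dots> = (\<Sum>i\<in>UNIV. \<Sum>j\<in>UNIV. \<Sum>l\<in>UNIV. \<Sum>k\<in>UNIV.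
     (if j = k then 1 else 0) * (of_real (H i l) * z i * w j * cnj (z k) * cnj (w l)))"
    by (rule sum.cong[OF refl], rule sum.cong[OF refl], rule sum.swap)
  also have "\<dots> = (\<Sum>i\<in>UNIV. \<Sum>j\<in>UNIV. \<Sum>l\<in>UNIV. of_real (H i l) * z i * w j * cnj (z j) * cnj (w l))"
    by (simp only: if01) simp
  also have "\<dots> = (\<Sum>i\<in>UNIV. \<Sum>l\<in>UNIV. \<Sum>j\<in>UNIV. of_real (H i l) * z i * w j * cnj (z j) * cnj (w l))"
    by (rule sum.cong[OF refl], rule sum.swap)
  also have "\<dots> = (\<Sum>i\<in>UNIV. \<Sum>k\<in>UNIV. of_real (H i k) * (ipc w z * z i * cnj (w k)))"
    by (simp add: ipc_def sum_distrib_left sum_distrib_right mult_ac)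
  finally show ?thesis .
qed

lemma piece3:
  fixes H :: "('n::finite) bilin" and z w :: "'n \<Rightarrow> complex"
  shows "curv_cx (\<lambda>i j k l. H j k * kd i l) z w =
    (\<Sum>i\<in>UNIV. \<Sum>k\<in>UNIV. of_real (H i k) * (ipc z w * w i * cnj (z k)))"
proof -
  have "curv_cx (\<lambda>i j k l. H j k * kd i l) z w = (\<Sum>i\<in>UNIV. \<Sum>j\<in>UNIV. \<Sum>k\<in>UNIV. \<Sum>l\<in>UNIV.
     (if i = l then 1 else 0) * (of_real (H j k) * z i * w j * cnj (z k) * cnj (w l)))"
    unfolding curv_cx_def by (simp add: ckd mult_ac)
  also have "\<dots> = (\<Sum>i\<in>UNIV. \<Sum>j\<in>UNIV. \<Sum>k\<in>UNIV. of_real (H j k) * z i * w j * cnj (z k) * cnj (w i))"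
    by (simp only: if01) simp
  also have "\<dots> = (\<Sum>j\<in>UNIV. \<Sum>i\<in>UNIV. \<Sum>k\<in>UNIV. of_real (H j k) * z i * w j * cnj (z k) * cnj (w i))"
    by (rule sum.swap)
  also have "\<dots> = (\<Sum>j\<in>UNIV. \<Sum>k\<in>UNIV. \<Sum>i\<in>UNIV. of_real (H j k) * z i * w j * cnj (z k) * cnj (w i))"
    by (rule sum.cong[OF refl], rule sum.swap)
  also have "\<dots> = (\<Sum>i\<in>UNIV. \<Sum>k\<in>UNIV. of_real (H i k) * (ipc z w * w i * cnj (z k)))"
    by (simp add: ipc_def sum_distrib_left sum_distrib_right mult_ac)
  finally show ?thesis .
qed

lemma piece4:
  fixes H :: "('n::finite) bilin" and z w :: "'n \<Rightarrow> complex"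
  shows "curv_cx (\<lambda>i j k l. H j l * kd i k) z w =
    (\<Sum>i\<in>UNIV. \<Sum>k\<in>UNIV. of_real (H i k) * (ipc z z * w i * cnj (w k)))"
proof -
  have "curv_cx (\<lambda>i j k l. H j l * kd i k) z w = (\<Sum>i\<in>UNIV. \<Sum>j\<in>UNIV. \<Sum>k\<in>UNIV. \<Sum>l\<in>UNIV.
     (if i = k then 1 else 0) * (of_real (H j l) * z i * w j * cnj (z k) * cnj (w l)))"
    unfolding curv_cx_def by (simp add: ckd mult_ac)
  also have "\<dots> = (\<Sum>i\<in>UNIV. \<Sum>j\<in>UNIV. \<Sum>l\<in>UNIV. \<Sum>k\<in>UNIV.
     (if i = k then 1 else 0) * (of_real (H j l) * z i * w j * cnj (z k) * cnj (w l)))"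
    by (rule sum.cong[OF refl], rule sum.cong[OF refl], rule sum.swap)
  also have "\<dots> = (\<Sum>i\<in>UNIV. \<Sum>j\<in>UNIV. \<Sum>l\<in>UNIV. of_real (H j l) * z i * w j * cnj (z i) * cnj (w l))"
    by (simp only: if01) simp
  also have "\<dots> = (\<Sum>j\<in>UNIV. \<Sum>i\<in>UNIV. \<Sum>l\<in>UNIV. of_real (H j l) * z i * w j * cnj (z i) * cnj (w l))"
    by (rule sum.swap)
  also have "\<dots> = (\<Sum>j\<in>UNIV. \<Sum>l\<in>UNIV. \<Sum>i\<in>UNIV. of_real (H j l) * z i * w j * cnj (z i) * cnj (w l))"
    by (rule sum.cong[OF refl], rule sum.swap)
  also have "\<dots> = (\<Sum>i\<in>UNIV. \<Sum>k\<in>UNIV. of_real (H i k) * (ipc z z * w i * cnj (w k)))"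
    by (simp add: ipc_def sum_distrib_left sum_distrib_right mult_ac)
  finally show ?thesis .
qed

lemma step1:
  fixes H :: "('n::finite) bilin" and z w :: "'n \<Rightarrow> complex"
  shows "curv_cx (H \<odot> idf) z w = (\<Sum>i\<in>UNIV. \<Sum>k\<in>UNIV. of_real (H i k) * Gm z w i k)"
proof -
  have e: "H \<odot> idf = (\<lambda>i j k l. H i k * kd j l - H i l * kd j k - H j k * kd i l + H j l * kd i k)"
    by (simp add: KN_def idf_def kd_def fun_eq_iff)
  show ?thesis
    unfolding e curv_cx_add curv_cx_diff piece1 piece2 piece3 piece4 Gm_def
    by (simp add: sum_subtractf sum.distrib algebra_simps)
qed

lemma cnj_ipc: "cnj (ipc a b) = ipc b a"
  unfolding ipc_def by (simp add: mult.commute)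

lemma Gm_herm: "cnj (Gm z w i k) = Gm z w k i"
  unfolding Gm_def by (simp add: cnj_ipc algebra_simps)

lemma lin2: "(\<Sum>j\<in>UNIV. (a * x j - b * y j) * u j) = a * (\<Sum>j\<in>UNIV. x j * u j) - b * (\<Sum>j\<in>UNIV. y j * (u j::complex))"
  by (simp add: sum_subtractf sum_distrib_left algebra_simps)

lemma sum4: "(\<Sum>i\<in>UNIV. a * x i - b * y i - c * u i + d * v i) = a * sum x UNIV - b * sum y UNIV - c * sum u UNIV + d * sum (v::_\<Rightarrow>complex) UNIV"
  by (simp add: sum.distrib sum_subtractf sum_distrib_left)

lemma Gm_sq:
  fixes z w :: "'n::finite \<Rightarrow> complex"
  shows "(\<Sum>j\<in>UNIV. Gm z w i j * Gm z w j k) =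
     (ipc z z * ipc w w - ipc z w * ipc w z) * Gm z w i k"
proof -
  define A where "A = ipc z z"
  define B where "B = ipc w w"
  define P where "P = ipc z w"
  define P' where "P' = ipc w z"
  define \<alpha> where "\<alpha> = (\<lambda>j. B * cnj (z j) - P' * cnj (w j))"
  define \<beta> where "\<beta> = (\<lambda>j. A * cnj (w j) - P * cnj (z j))"
  have G: "\<And>i j. Gm z w i j = z i * \<alpha> j + w i * \<beta> j"
    unfolding Gm_def \<alpha>_def \<beta>_def A_def B_def P_def P'_def by (simp add: algebra_simps)
  have s1: "(\<Sum>j\<in>UNIV. (z i * \<alpha> j + w i * \<beta> j) * (z j * \<alpha> k + w j * \<beta> k)) =
     z i * \<alpha> k * (\<Sum>j\<in>UNIV. \<alpha> j * z j) + z i * \<beta> k * (\<Sum>j\<in>UNIV. \<alpha> j * w j)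
     + w i * \<alpha> k * (\<Sum>j\<in>UNIV. \<beta> j * z j) + w i * \<beta> k * (\<Sum>j\<in>UNIV. \<beta> j * w j)"
    by (simp add: algebra_simps sum.distrib sum_distrib_left)
  have a1: "(\<Sum>j\<in>UNIV. \<alpha> j * z j) = B * A - P' * P"
    unfolding \<alpha>_def lin2 unfolding A_def P_def B_def P'_def ipc_def by (simp add: mult_ac)
  have a2: "(\<Sum>j\<in>UNIV. \<alpha> j * w j) = 0"
    unfolding \<alpha>_def lin2 unfolding A_def P_def B_def P'_def ipc_def by (simp add: mult_ac)
  have a3: "(\<Sum>j\<in>UNIV. \<beta> j * z j) = 0"
    unfolding \<beta>_def lin2 unfolding A_def P_def B_def P'_def ipc_def by (simp add: mult_ac)
  have a4: "(\<Sum>j\<in>UNIV. \<beta> j * w j) = A * B - P * P'"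
    unfolding \<beta>_def lin2 unfolding A_def P_def B_def P'_def ipc_def by (simp add: mult_ac)
  show ?thesis
    unfolding G s1 a1 a2 a3 a4 by (simp add: A_def[symmetric] B_def[symmetric] P_def[symmetric] P'_def[symmetric] algebra_simps)
qed

lemma Gm_tr:
  fixes z w :: "'n::finite \<Rightarrow> complex"
  shows "(\<Sum>i\<in>UNIV. Gm z w i i) = 2 * (ipc z z * ipc w w - ipc z w * ipc w z)"
  unfolding Gm_def mult.assoc sum4 unfolding ipc_def by (simp add: algebra_simps)

lemma lagrange:
  fixes z w :: "'n::finite \<Rightarrow> complex"
  shows "(\<Sum>i\<in>UNIV. \<Sum>j\<in>UNIV. (z i * w j - z j * w i) * cnj (z i * w j - z j * w i))
     = 2 * (ipc z z * ipc w w - ipc z w * ipc w z)"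
proof -
  have "(\<Sum>i\<in>UNIV. \<Sum>j\<in>UNIV. (z i * w j - z j * w i) * cnj (z i * w j - z j * w i))
     = (\<Sum>i\<in>UNIV. \<Sum>j\<in>UNIV. (z i * cnj (z i)) * (w j * cnj (w j)))
     - (\<Sum>i\<in>UNIV. \<Sum>j\<in>UNIV. (z i * cnj (w i)) * (w j * cnj (z j)))
     - (\<Sum>i\<in>UNIV. \<Sum>j\<in>UNIV. (w i * cnj (z i)) * (z j * cnj (w j)))
     + (\<Sum>i\<in>UNIV. \<Sum>j\<in>UNIV. (w i * cnj (w i)) * (z j * cnj (z j)))"
    apply (simp only: sum_subtractf[symmetric] sum.distrib[symmetric])
    apply (rule sum.cong[OF refl])+
    by (simp add: algebra_simps)
  also have "\<dots> = ipc z z * ipc w w - ipc z w * ipc w z - ipc w z * ipc z w + ipc w w * ipc z z"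
    unfolding ipc_def sum_product ..
  also have "\<dots> = 2 * (ipc z z * ipc w w - ipc z w * ipc w z)"
    by (simp add: algebra_simps)
  finally show ?thesis .
qed

lemma c_real:
  fixes z w :: "'n::finite \<Rightarrow> complex"
  shows "\<exists>r\<ge>0. ipc z z * ipc w w - ipc z w * ipc w z = complex_of_real r"
proof -
  let ?M = "\<lambda>i j. z i * w j - z j * w i"
  have "2 * (ipc z z * ipc w w - ipc z w * ipc w z) = (\<Sum>i\<in>UNIV. \<Sum>j\<in>UNIV. complex_of_real ((cmod (?M i j))\<^sup>2))"
    unfolding lagrange[symmetric] complex_norm_square by simp
  also have "\<dots> = complex_of_real (\<Sum>i\<in>UNIV. \<Sum>j\<in>UNIV. (cmod (?M i j))\<^sup>2)" by simp
  finally have "ipc z z * ipc w w - ipc z w * ipc w z = complex_of_real ((\<Sum>i\<in>UNIV. \<Sum>j\<in>UNIV. (cmod (?M i j))\<^sup>2) / 2)"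
    by (simp add: field_simps)
  moreover have "(\<Sum>i\<in>UNIV. \<Sum>j\<in>UNIV. (cmod (?M i j))\<^sup>2) / 2 \<ge> 0"
    by (simp add: sum_nonneg)
  ultimately show ?thesis by blast
qed

lemma herm_form:
  fixes T :: "('n::finite) bilin" and m :: "'n \<Rightarrow> complex"
  assumes sym: "sym_form T" and ps: "psd T"
  shows "\<exists>r\<ge>0. (\<Sum>i\<in>UNIV. \<Sum>k\<in>UNIV. of_real (T i k) * (m i * cnj (m k))) = of_real r"
proof -
  let ?x = "\<lambda>i. Re (m i)" and ?y = "\<lambda>i. Im (m i)"
  let ?S = "(\<Sum>i\<in>UNIV. \<Sum>k\<in>UNIV. of_real (T i k) * (m i * cnj (m k)))"
  have re: "Re ?S = (\<Sum>i\<in>UNIV. \<Sum>k\<in>UNIV. T i k * ?x i * ?x k) + (\<Sum>i\<in>UNIV. \<Sum>k\<in>UNIV. T i k * ?y i * ?y k)"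
    by (simp add: sum.distrib[symmetric] algebra_simps)
  have sw: "(\<Sum>i\<in>UNIV. \<Sum>k\<in>UNIV. T i k * ?y i * ?x k) = (\<Sum>i\<in>UNIV. \<Sum>k\<in>UNIV. T i k * ?x i * ?y k)"
    apply (subst sum.swap)
    using sym unfolding sym_form_def by (simp add: mult_ac)
  have im: "Im ?S = (\<Sum>i\<in>UNIV. \<Sum>k\<in>UNIV. T i k * ?y i * ?x k) - (\<Sum>i\<in>UNIV. \<Sum>k\<in>UNIV. T i k * ?x i * ?y k)"
    by (simp add: sum_subtractf[symmetric] algebra_simps)
  have "?S = of_real (Re ?S)" using im sw by (simp add: complex_eq_iff)
  moreover have "Re ?S \<ge> 0" unfolding re using ps unfolding psd_def
    by (simp add: add_nonneg_nonneg)
  ultimately show ?thesis by blast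
qed

lemma sum_idf_l: "(\<Sum>k\<in>UNIV. complex_of_real (idf i k) * f k) = f i"
  by (simp add: idf_def ckd if01)
lemma sum_idf_r: "(\<Sum>k\<in>UNIV. f k * complex_of_real (idf k i)) = f i"
proof -
  have "\<And>k. f k * complex_of_real (idf k i) = complex_of_real (idf i k) * f k"
    by (simp add: idf_def kd_def)
  then show ?thesis unfolding sum_idf_l by (simp only: sum_idf_l)
qed

lemma div_aux:
  assumes "(d::real) > 0" "complex_of_real d * Q = complex_of_real S"
  shows "Q = complex_of_real (S / d)"
proof -
  have "complex_of_real d \<noteq> 0" using assms(1) by simp
  then have "Q = complex_of_real S / complex_of_real d" using assms(2)
    by (simp add: eq_divide_eq mult.commute)
  then show ?thesis by (simp add: of_real_divide)
qed

lemma KN_pic2: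
  fixes H :: "('n::finite) bilin" and z w :: "'n \<Rightarrow> complex"
  assumes sym: "sym_form H" and n3: "CARD('n) \<ge> 3"
    and psdT: "psd (\<lambda>i j. tr H * idf i j - (real CARD('n) - 2) * H i j)"
  shows "Im (curv_cx (H \<odot> idf) z w) = 0 \<and> Re (curv_cx (H \<odot> idf) z w) \<ge> 0"
proof -
  define T where "T = (\<lambda>i j. tr H * idf i j - (real CARD('n) - 2) * H i j)"
  define G where "G = Gm z w"
  define c where "c = ipc z z * ipc w w - ipc z w * ipc w z"
  obtain r where r0: "r \<ge> 0" and cr: "c = of_real r" using c_real[of z w] unfolding c_def by blast
  define Q where "Q = curv_cx (H \<odot> idf) z w"
  define K where "K = (\<lambda>i k. c * of_real (idf i k) - G i k)"
  have Q: "Q = (\<Sum>i\<in>UNIV. \<Sum>k\<in>UNIV. of_real (H i k) * G i k)"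
    unfolding Q_def G_def by (rule step1)
  have symT: "sym_form T" using sym unfolding T_def sym_form_def idf_def kd_def by auto
  have psT: "psd T" using psdT unfolding T_def .
  have nn: "real CARD('n) - 2 > 0" using n3 by simp
  have hT: "\<And>i k. (real CARD('n) - 2) * H i k = tr H * idf i k - T i k"
    unfolding T_def by simp
  have trid: "(\<Sum>i\<in>UNIV. idf (i::'n) i) = real CARD('n)" by (simp add: idf_def kd_def)
  have trT0: "(\<Sum>i\<in>UNIV. T i i) = tr H * (\<Sum>i\<in>UNIV. idf (i::'n) i) - (real CARD('n) - 2) * tr H"
    unfolding T_def tr_def by (simp add: sum_subtractf sum_distrib_left)
  have trT: "(\<Sum>i\<in>UNIV. T i i) = 2 * tr H" unfolding trT0 trid by (simp add: algebra_simps)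
  have trG: "(\<Sum>i\<in>UNIV. G i i) = 2 * c" unfolding G_def c_def by (rule Gm_tr)
  have claim1: "of_real (real CARD('n) - 2) * Q = (\<Sum>i\<in>UNIV. \<Sum>k\<in>UNIV. of_real (T i k) * K i k)"
  proof -
    have "of_real (real CARD('n) - 2) * Q = (\<Sum>i\<in>UNIV. \<Sum>k\<in>UNIV. of_real ((real CARD('n) - 2) * H i k) * G i k)"
      unfolding Q by (simp add: sum_distrib_left mult_ac)
    also have "\<dots> = (\<Sum>i\<in>UNIV. \<Sum>k\<in>UNIV. of_real (tr H) * (of_real (idf i k) * G i k) - of_real (T i k) * G i k)"
      unfolding hT by (simp add: algebra_simps)
    also have "\<dots> = of_real (tr H) * (2 * c) - (\<Sum>i\<in>UNIV. \<Sum>k\<in>UNIV. of_real (T i k) * G i k)"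
      by (simp add: sum_subtractf sum_distrib_left[symmetric] sum_idf_l trG)
    also have "\<dots> = c * (\<Sum>i\<in>UNIV. of_real (T i i)) - (\<Sum>i\<in>UNIV. \<Sum>k\<in>UNIV. of_real (T i k) * G i k)"
      using trT by (simp flip: of_real_sum)
    also have "\<dots> = (\<Sum>i\<in>UNIV. \<Sum>k\<in>UNIV. of_real (T i k) * K i k)"
    proof -
      have e: "\<And>i. (\<Sum>k\<in>UNIV. complex_of_real (idf i k) * complex_of_real (T i k)) = of_real (T i i)"
        by (rule sum_idf_l)
      show ?thesis
        unfolding K_def by (simp add: algebra_simps sum_subtractf sum_distrib_left[symmetric] e)
    qed
    finally show ?thesis .
  qed
  have Gsq: "\<And>i k. (\<Sum>j\<in>UNIV. G i j * G j k) = c * G i k"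
    unfolding G_def c_def by (rule Gm_sq)
  have Kd: "\<And>i k. K i k = c * of_real (idf i k) - G i k" by (simp add: K_def)
  have claim2: "\<And>i k. (\<Sum>j\<in>UNIV. K i j * K j k) = c * K i k"
  proof -
    fix i k
    have "(\<Sum>j\<in>UNIV. K i j * K j k) = (\<Sum>j\<in>UNIV. K i j * of_real (idf j k)) * c - (\<Sum>j\<in>UNIV. K i j * G j k)"
      by (simp add: Kd[of _ k] algebra_simps sum_subtractf sum_distrib_right sum_distrib_left)
    also have "\<dots> = K i k * c - (c * (\<Sum>j\<in>UNIV. of_real (idf i j) * G j k) - (\<Sum>j\<in>UNIV. G i j * G j k))"
      unfolding sum_idf_r by (simp add: Kd[of i] algebra_simps sum_subtractf sum_distrib_left)
    also have "\<dots> = c * K i k"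
      unfolding sum_idf_l Gsq by (simp add: algebra_simps)
    finally show "(\<Sum>j\<in>UNIV. K i j * K j k) = c * K i k" .
  qed
  have claim3: "\<And>j k. cnj (K k j) = K j k"
    unfolding K_def G_def cr by (simp add: Gm_herm idf_def kd_def)
  have "of_real r * (of_real (real CARD('n) - 2) * Q) = (\<Sum>i\<in>UNIV. \<Sum>k\<in>UNIV. of_real (T i k) * (c * K i k))"
    unfolding claim1 cr by (simp add: sum_distrib_left mult_ac)
  also have "\<dots> = (\<Sum>i\<in>UNIV. \<Sum>k\<in>UNIV. \<Sum>j\<in>UNIV. of_real (T i k) * (K i j * cnj (K k j)))"
    unfolding claim2[symmetric] claim3 by (simp add: sum_distrib_left)
  also have "\<dots> = (\<Sum>i\<in>UNIV. \<Sum>j\<in>UNIV. \<Sum>k\<in>UNIV. of_real (T i k) * (K i j * cnj (K k j)))"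
    by (rule sum.cong[OF refl], rule sum.swap)
  also have "\<dots> = (\<Sum>j\<in>UNIV. \<Sum>i\<in>UNIV. \<Sum>k\<in>UNIV. of_real (T i k) * (K i j * cnj (K k j)))"
    by (rule sum.swap)
  finally have main: "of_real r * (of_real (real CARD('n) - 2) * Q) = (\<Sum>j\<in>UNIV. \<Sum>i\<in>UNIV. \<Sum>k\<in>UNIV. of_real (T i k) * (K i j * cnj (K k j)))" .
  have ex: "\<forall>j. \<exists>s\<ge>0. (\<Sum>i\<in>UNIV. \<Sum>k\<in>UNIV. of_real (T i k) * (K i j * cnj (K k j))) = of_real s"
  proof
    fix j show "\<exists>s\<ge>0. (\<Sum>i\<in>UNIV. \<Sum>k\<in>UNIV. of_real (T i k) * (K i j * cnj (K k j))) = of_real s"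
      using herm_form[OF symT psT, of "\<lambda>i. K i j"] by simp
  qed
  obtain s where sa: "\<forall>j. s j \<ge> 0 \<and> (\<Sum>i\<in>UNIV. \<Sum>k\<in>UNIV. of_real (T i k) * (K i j * cnj (K k j))) = of_real (s j)"
    using choice[OF ex] by blast
  have s0: "\<And>j. s j \<ge> 0" and s: "\<And>j. (\<Sum>i\<in>UNIV. \<Sum>k\<in>UNIV. of_real (T i k) * (K i j * cnj (K k j))) = of_real (s j)"
    using sa by auto
  have main2: "of_real (r * (real CARD('n) - 2)) * Q = of_real (\<Sum>j\<in>UNIV. s j)"
    using main unfolding s by (simp add: mult_ac)
  show ?thesis
  proof (cases "r = 0")
    case False
    then have rp: "r * (real CARD('n) - 2) > 0" using r0 nn by simp
    have "Q = of_real ((\<Sum>j\<in>UNIV. s j) / (r * (real CARD('n) - 2)))"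
      using div_aux[OF rp main2] .
    moreover have "(\<Sum>j\<in>UNIV. s j) / (r * (real CARD('n) - 2)) \<ge> 0"
      using rp s0 by (simp add: sum_nonneg)
    ultimately show ?thesis unfolding Q_def by simp
  next
    case True
    then have c0: "c = 0" using cr by simp
    have "\<And>i j. G i j = 0"
    proof -
      fix i j
      have "(\<Sum>j\<in>UNIV. of_real ((cmod (G i j))\<^sup>2)) = (\<Sum>j\<in>UNIV. G i j * G j i)"
        unfolding complex_norm_square by (metis G_def Gm_herm)
      also have "\<dots> = 0" using Gsq c0 by simp
      finally have "(\<Sum>j\<in>UNIV. (cmod (G i j))\<^sup>2) = 0"
        by (metis of_real_eq_0_iff of_real_sum)
      then have "\<forall>j\<in>UNIV. (cmod (G i j))\<^sup>2 = 0"
        by (subst sum_nonneg_eq_0_iff[symmetric]) auto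
      then show "G i j = 0" by simp
    qed
    then have "Q = 0" unfolding Q by simp
    then show ?thesis unfolding Q_def by simp
  qed
qed





lemma kd_sym: "kd a b = kd b a" by (simp add: kd_def)
lemma if01r: "(if P then 1 else 0) * (x::real) = (if P then x else 0)" "x * (if P then 1 else 0) = (if P then x else 0)" by simp_all
lemma sum_kd1[simp]: "(\<Sum>k\<in>UNIV. kd (i::'a::finite) k * f k) = (f i :: real)" by (simp add: kd_def if01r)
lemma sum_kd2[simp]: "(\<Sum>k\<in>UNIV. f k * kd (i::'a::finite) k) = (f i :: real)" by (simp add: kd_def if01r)
lemma sum_kd3[simp]: "(\<Sum>k\<in>UNIV. kd k (i::'a::finite) * f k) = (f i :: real)" by (simp add: kd_def if01r)
lemma sum_kd4[simp]: "(\<Sum>k\<in>UNIV. f k * kd k (i::'a::finite)) = (f i :: real)" by (simp add: kd_def if01r)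

definition sec :: "('n::finite) tensor4 \<Rightarrow> ('n \<Rightarrow> real) \<Rightarrow> ('n \<Rightarrow> real) \<Rightarrow> real" where
  "sec X x y = (\<Sum>i\<in>UNIV. \<Sum>j\<in>UNIV. \<Sum>k\<in>UNIV. \<Sum>l\<in>UNIV. X i j k l * x i * y j * x k * y l)"

definition Bform :: "('n::finite) tensor4 \<Rightarrow> ('n \<Rightarrow> real) \<Rightarrow> 'n \<Rightarrow> 'n \<Rightarrow> real" where
  "Bform X x j l = (\<Sum>i\<in>UNIV. \<Sum>k\<in>UNIV. X i j k l * x i * x k)"

lemma cx_real:
  "curv_cx X (\<lambda>i. complex_of_real (x i)) (\<lambda>i. complex_of_real (y i)) = complex_of_real (sec X x y)"
  unfolding curv_cx_def sec_def by simp

lemma sec_PIC2: assumes "X \<in> PIC2" shows "sec X x y \<ge> 0"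
proof -
  have "Re (curv_cx X (\<lambda>i. complex_of_real (x i)) (\<lambda>i. complex_of_real (y i))) \<ge> 0"
    using assms unfolding PIC2_def by blast
  then show ?thesis unfolding cx_real by simp
qed

lemma sec_KN:
  assumes "sym_form H" "CARD('n::finite) \<ge> 3" "psd (\<lambda>i j. tr H * idf i j - (real CARD('n) - 2) * H (i::'n) j)"
  shows "sec (H \<odot> idf) x y \<ge> 0"
  using KN_pic2[OF assms, of "\<lambda>i. complex_of_real (x i)" "\<lambda>i. complex_of_real (y i)"] cx_real[of "H \<odot> idf" x y]
  by simp

lemma Bform_quad: "(\<Sum>j\<in>UNIV. \<Sum>l\<in>UNIV. Bform X x j l * y j * y l) = sec X x y"
proof -
  have "(\<Sum>j\<in>UNIV. \<Sum>l\<in>UNIV. Bform X x j l * y j * y l) =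
    (\<Sum>j\<in>UNIV. \<Sum>l\<in>UNIV. \<Sum>i\<in>UNIV. \<Sum>k\<in>UNIV. X i j k l * x i * y j * x k * y l)"
    unfolding Bform_def by (simp add: sum_distrib_right sum_distrib_left mult_ac)
  also have "\<dots> = (\<Sum>j\<in>UNIV. \<Sum>i\<in>UNIV. \<Sum>l\<in>UNIV. \<Sum>k\<in>UNIV. X i j k l * x i * y j * x k * y l)"
    by (rule sum.cong[OF refl], rule sum.swap)
  also have "\<dots> = (\<Sum>i\<in>UNIV. \<Sum>j\<in>UNIV. \<Sum>l\<in>UNIV. \<Sum>k\<in>UNIV. X i j k l * x i * y j * x k * y l)"
    by (rule sum.swap)
  also have "\<dots> = sec X x y"
    unfolding sec_def by (rule sum.cong[OF refl], rule sum.cong[OF refl], rule sum.swap)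
  finally show ?thesis .
qed

lemma Bform_tr: "(\<Sum>j\<in>UNIV. Bform X x j j) = (\<Sum>i\<in>UNIV. \<Sum>k\<in>UNIV. Ric X i k * x i * x k)"
proof -
  have "(\<Sum>j\<in>UNIV. Bform X x j j) = (\<Sum>j\<in>UNIV. \<Sum>i\<in>UNIV. \<Sum>k\<in>UNIV. X i j k j * x i * x k)"
    unfolding Bform_def ..
  also have "\<dots> = (\<Sum>i\<in>UNIV. \<Sum>j\<in>UNIV. \<Sum>k\<in>UNIV. X i j k j * x i * x k)"
    by (rule sum.swap)
  also have "\<dots> = (\<Sum>i\<in>UNIV. \<Sum>k\<in>UNIV. \<Sum>j\<in>UNIV. X i j k j * x i * x k)"
    by (rule sum.cong[OF refl], rule sum.swap)
  also have "\<dots> = (\<Sum>i\<in>UNIV. \<Sum>k\<in>UNIV. Ric X i k * x i * x k)"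
    unfolding Ric_def by (simp add: sum_distrib_right)
  finally show ?thesis .
qed

lemma Bform_sym: "alg_curv X \<Longrightarrow> Bform X x j l = Bform X x l j"
  unfolding Bform_def alg_curv_def
  apply (subst sum.swap)
  apply (rule sum.cong[OF refl])+
  by (metis mult.commute mult.left_commute)

definition qf :: "('n::finite) bilin \<Rightarrow> ('n \<Rightarrow> real) \<Rightarrow> ('n \<Rightarrow> real) \<Rightarrow> real" where
  "qf B u v = (\<Sum>j\<in>UNIV. \<Sum>l\<in>UNIV. B j l * u j * v l)"

lemma qf_add: "qf B (\<lambda>i. u i + t * v i) (\<lambda>i. u i + t * v i) = qf B u u + t * (qf B u v + qf B v u) + t * t * qf B v v"
  unfolding qf_def by (simp add: algebra_simps sum.distrib sum_distrib_left)

lemma qf_kd: "qf (B::('n::finite) bilin) (\<lambda>i. kd a i) (\<lambda>i. kd b i) = B a b"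
  unfolding qf_def by simp

lemma quad_kd: "(\<Sum>j\<in>UNIV. \<Sum>l\<in>UNIV. (B::('n::finite) bilin) j l * (kd a j + t * kd b j) * (kd a l + t * kd b l))
   = B a a + t * (B a b + B b a) + t * t * (B b b :: real)"
  using qf_add[of B "\<lambda>i. kd a i" t "\<lambda>i. kd b i"] unfolding qf_kd by (simp add: qf_def)

lemma zero_form:
  fixes B :: "('n::finite) bilin"
  assumes sym: "\<And>j l. B j l = B l j"
    and ps: "\<And>y. (\<Sum>j\<in>UNIV. \<Sum>l\<in>UNIV. B j l * y j * y l) \<ge> 0"
    and tr0: "(\<Sum>j\<in>UNIV. B j j) = 0"
  shows "B j l = 0"
proof -
  have diag: "B a a \<ge> 0" for a
    using ps[of "\<lambda>j. kd a j + 0 * kd a j"] unfolding quad_kd by simp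
  have d0: "\<And>a. B a a = 0"
    using tr0 diag sum_nonneg_eq_0_iff[of UNIV "\<lambda>j. B j j"] by auto
  have p: "0 \<le> 2 * B j l" using ps[of "\<lambda>i. kd j i + 1 * kd l i"] unfolding quad_kd using d0 sym[of l j] by simp
  have m: "0 \<le> - 2 * B j l" using ps[of "\<lambda>i. kd j i + (-1) * kd l i"] unfolding quad_kd using d0 sym[of l j] by simp
  show ?thesis using p m by simp
qed




lemma alg_curv_KN: assumes "sym_form H" shows "alg_curv (H \<odot> idf)"
proof -
  have s: "\<And>i j. H i j = H j i" using assms unfolding sym_form_def by auto
  have t: "\<And>i j. kd i j = kd j i" by (rule kd_sym)
  show ?thesis unfolding alg_curv_def KN_def idf_def
  proof (intro conjI allI)
    fix i j k l
    show "H i k * kd j l - H i l * kd j k - H j k * kd i l + H j l * kd i k =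
       - (H j k * kd i l - H j l * kd i k - H i k * kd j l + H i l * kd j k)" by simp
    show "H i k * kd j l - H i l * kd j k - H j k * kd i l + H j l * kd i k =
       H k i * kd l j - H k j * kd l i - H l i * kd k j + H l j * kd k i"
      by (simp add: s[of k i] s[of k j] s[of l i] s[of l j] t[of l j] t[of l i] t[of k j] t[of k i])
    show "H i k * kd j l - H i l * kd j k - H j k * kd i l + H j l * kd i k +
       (H j i * kd k l - H j l * kd k i - H k i * kd j l + H k l * kd j i) +
       (H k j * kd i l - H k l * kd i j - H i j * kd k l + H i l * kd k j) = 0"
      by (simp add: s[of j i] s[of k i] s[of k j] t[of k i] t[of j i] t[of k j])
  qed
qed

lemma alg_curv_add: assumes "alg_curv A" "alg_curv B" shows "alg_curv (\<lambda>i j k l. A i j k l + B i j k l)"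
proof -
  note Ad = assms(1)[unfolded alg_curv_def] and Bd = assms(2)[unfolded alg_curv_def]
  note a1 = conjunct1[OF Ad, rule_format] and a2 = conjunct1[OF conjunct2[OF Ad], rule_format]
    and a3 = conjunct2[OF conjunct2[OF Ad], rule_format]
  note b1 = conjunct1[OF Bd, rule_format] and b2 = conjunct1[OF conjunct2[OF Bd], rule_format]
    and b3 = conjunct2[OF conjunct2[OF Bd], rule_format]
  show ?thesis unfolding alg_curv_def
  proof (intro conjI allI)
    fix i j k l
    show "A i j k l + B i j k l = - (A j i k l + B j i k l)" using a1[of i j k l] b1[of i j k l] by linarith
    show "A i j k l + B i j k l = A k l i j + B k l i j" using a2[of i j k l] b2[of i j k l] by linarith
    show "A i j k l + B i j k l + (A j k i l + B j k i l) + (A k i j l + B k i j l) = 0"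
      using a3[of i j k l] b3[of i j k l] by linarith
  qed
qed

lemma psd_diag:
  fixes B :: "('n::finite) bilin"
  assumes ps: "\<And>y. (\<Sum>j\<in>UNIV. \<Sum>l\<in>UNIV. B j l * y j * y l) \<ge> 0"
  shows "B a a \<ge> 0"
  using ps[of "\<lambda>j. kd a j + 0 * kd a j"] unfolding quad_kd by simp

definition ricq :: "('n::finite) tensor4 \<Rightarrow> ('n \<Rightarrow> real) \<Rightarrow> real" where
  "ricq X x = (\<Sum>i\<in>UNIV. \<Sum>k\<in>UNIV. Ric X i k * x i * x k)"

lemma ricq_nonneg:
  assumes "\<And>x y. sec X x y \<ge> 0"
  shows "ricq X x \<ge> 0"
proof -
  have "\<And>j. Bform X x j j \<ge> 0"
    by (rule psd_diag) (simp add: Bform_quad assms)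
  then show ?thesis unfolding ricq_def Bform_tr[symmetric] by (simp add: sum_nonneg)
qed

lemma ricq_add: "ricq (\<lambda>i j k l. A i j k l + B i j k l) x = ricq A x + ricq B x"
  unfolding ricq_def Ric_def by (simp add: sum.distrib algebra_simps)

lemma Bform_two:
  "Bform S (\<lambda>i. kd a i + kd b i) j l = S a j a l + S a j b l + S b j a l + S b j b l"
  unfolding Bform_def by (simp only: distrib_left distrib_right sum.distrib) simp

lemma Bform_one: "Bform S (\<lambda>i. kd a i) j l = S a j a l"
  unfolding Bform_def by simp

lemma tensor_zero:
  assumes ac: "alg_curv S" and z: "\<And>x j l. Bform S x j l = 0"
  shows "S i j k l = 0"
proof -
  have P: "\<And>a j b l. S a j b l = - S b j a l"
  proof -
    fix a j b l
    have "S a j a l + S a j b l + S b j a l + S b j b l = 0" using z[of "\<lambda>i. kd a i + kd b i" j l] unfolding Bform_two .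
    moreover have "S a j a l = 0" "S b j b l = 0" using z[of "\<lambda>i. kd a i"] z[of "\<lambda>i. kd b i"] unfolding Bform_one by auto
    ultimately show "S a j b l = - S b j a l" by simp
  qed
  note Ad = ac[unfolded alg_curv_def]
  note a1 = conjunct1[OF Ad, rule_format] and b = conjunct2[OF conjunct2[OF Ad], rule_format]
  have "S j k i l = S i j k l" using P[of k j i l] a1[of j k i l] by linarith
  moreover have "S k i j l = S i j k l" using P[of k i j l] a1[of j i k l] by linarith
  ultimately show ?thesis using b[of i j k l] by linarith
qed




lemma Bform_KN:
  fixes H :: "('n::finite) bilin"
  assumes sym: "\<And>i j. H i j = H j i"
  shows "Bform (H \<odot> idf) v j l = (\<Sum>i\<in>UNIV. \<Sum>k\<in>UNIV. H i k * v i * v k) * kd j l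
     - (\<Sum>i\<in>UNIV. H i l * v i) * v j - (\<Sum>i\<in>UNIV. H i j * v i) * v l + H j l * (\<Sum>i\<in>UNIV. v i * v i)"
proof -
  have "Bform (H \<odot> idf) v j l = (\<Sum>i\<in>UNIV. \<Sum>k\<in>UNIV. H i k * kd j l * v i * v k)
     - (\<Sum>i\<in>UNIV. \<Sum>k\<in>UNIV. H i l * kd j k * v i * v k)
     - (\<Sum>i\<in>UNIV. \<Sum>k\<in>UNIV. H j k * kd i l * v i * v k)
     + (\<Sum>i\<in>UNIV. \<Sum>k\<in>UNIV. H j l * kd i k * v i * v k)"
    unfolding Bform_def KN_def idf_def
    by (simp only: left_diff_distrib distrib_right sum_subtractf sum.distrib)
  also have "(\<Sum>i\<in>UNIV. \<Sum>k\<in>UNIV. H i k * kd j l * v i * v k) = (\<Sum>i\<in>UNIV. \<Sum>k\<in>UNIV. H i k * v i * v k) * kd j l"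
    by (simp add: sum_distrib_right sum_distrib_left mult_ac)
  also have "(\<Sum>i\<in>UNIV. \<Sum>k\<in>UNIV. H i l * kd j k * v i * v k) = (\<Sum>i\<in>UNIV. \<Sum>k\<in>UNIV. (H i l * v i * v k) * kd j k)"
    by (simp add: mult_ac)
  also have "\<dots> = (\<Sum>i\<in>UNIV. H i l * v i) * v j"
    by (simp add: sum_distrib_right)
  also have "(\<Sum>i\<in>UNIV. \<Sum>k\<in>UNIV. H j k * kd i l * v i * v k) = (\<Sum>k\<in>UNIV. \<Sum>i\<in>UNIV. (H j k * v i * v k) * kd i l)"
    by (subst sum.swap) (simp add: mult_ac)
  also have "\<dots> = (\<Sum>i\<in>UNIV. H i j * v i) * v l"
    by (simp only: sum_kd4) (simp add: sum_distrib_right sum_distrib_left sym mult_ac)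
  also have "(\<Sum>i\<in>UNIV. \<Sum>k\<in>UNIV. H j l * kd i k * v i * v k) = (\<Sum>i\<in>UNIV. \<Sum>k\<in>UNIV. (H j l * v i * v k) * kd i k)"
    by (simp add: mult_ac)
  also have "\<dots> = H j l * (\<Sum>i\<in>UNIV. v i * v i)"
    by (simp only: sum_kd2) (simp add: sum_distrib_left mult_ac)
  finally show ?thesis .
qed


lemma H_rigid:
  fixes H :: "('n::finite) bilin" and v :: "'n \<Rightarrow> real"
  assumes sym: "\<And>i j. H i j = H j i" and n3: "CARD('n) \<ge> 3"
    and unit: "(\<Sum>i\<in>UNIV. v i * v i) = 1"
    and B0: "\<And>j l. Bform (H \<odot> idf) v j l = 0"
    and ps: "psd (\<lambda>i j. tr H * idf i j - (real CARD('n) - 2) * H i j)"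
  shows "\<exists>c\<ge>0. \<forall>j l. H j l = c * (idf j l - 2 * v j * v l)"
proof -
  define hvv where "hvv = (\<Sum>i\<in>UNIV. \<Sum>k\<in>UNIV. H i k * v i * v k)"
  define hv where "hv = (\<lambda>l. \<Sum>i\<in>UNIV. H i l * v i)"
  define c where "c = - hvv"
  define u where "u = (\<lambda>j. hv j + c * v j)"
  define N where "N = real CARD('n) - 2"
  have N0: "N > 0" unfolding N_def using n3 by simp
  have HF: "H j l = - hvv * kd j l + hv l * v j + hv j * v l" for j l
    using B0[of j l] unfolding Bform_KN[OF sym] unit hvv_def[symmetric] hv_def by simp
  have hvv_alt: "(\<Sum>j\<in>UNIV. hv j * v j) = hvv"
    unfolding hv_def hvv_def by (subst sum.swap) (simp add: sum_distrib_right)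
  have uv: "(\<Sum>j\<in>UNIV. u j * v j) = 0"
  proof -
    have "(\<Sum>j\<in>UNIV. u j * v j) = (\<Sum>j\<in>UNIV. hv j * v j) + c * (\<Sum>j\<in>UNIV. v j * v j)"
      unfolding u_def by (simp add: distrib_right sum.distrib sum_distrib_left mult.assoc)
    then show ?thesis using hvv_alt unit c_def by simp
  qed
  have HF2: "H j l = c * kd j l + (u l - c * v l) * v j + (u j - c * v j) * v l" for j l
    unfolding HF u_def c_def by (simp add: algebra_simps)
  have trid: "(\<Sum>i\<in>UNIV. kd (i::'n) i) = real CARD('n)" by (simp add: kd_def)
  have trH: "tr H = c * N"
  proof -
    have "tr H = (\<Sum>j\<in>UNIV. c * kd j j + 2 * (u j * v j) - 2 * c * (v j * v j))"
      unfolding tr_def by (rule sum.cong[OF refl]) (simp add: HF2 algebra_simps)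
    also have "\<dots> = c * (\<Sum>j\<in>UNIV. kd (j::'n) j) + 2 * (\<Sum>j\<in>UNIV. u j * v j) - 2 * c * (\<Sum>j\<in>UNIV. v j * v j)"
      by (simp add: sum.distrib sum_subtractf sum_distrib_left)
    also have "\<dots> = c * N" unfolding trid uv unit N_def by (simp add: algebra_simps)
    finally show ?thesis .
  qed
  have Tf: "tr H * idf j l - N * H j l = N * (2 * c * v j * v l - u l * v j - u j * v l)" for j l
    unfolding trH idf_def HF2[of j l] by (simp add: algebra_simps)
  have quad: "(\<Sum>j\<in>UNIV. \<Sum>l\<in>UNIV. (tr H * idf j l - N * H j l) * x j * x l) =
     N * (2 * c * ((\<Sum>j\<in>UNIV. v j * x j) * (\<Sum>j\<in>UNIV. v j * x j))
       - 2 * ((\<Sum>j\<in>UNIV. u j * x j) * (\<Sum>j\<in>UNIV. v j * x j)))" for x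
  proof -
    have "(\<Sum>j\<in>UNIV. \<Sum>l\<in>UNIV. (tr H * idf j l - N * H j l) * x j * x l) =
      (\<Sum>j\<in>UNIV. \<Sum>l\<in>UNIV. N * (2 * c) * ((v j * x j) * (v l * x l)) - N * ((v j * x j) * (u l * x l)) - N * ((u j * x j) * (v l * x l)))"
      unfolding Tf by (rule sum.cong[OF refl])+ (simp add: algebra_simps)
    also have "\<dots> = N * (2 * c) * (\<Sum>j\<in>UNIV. \<Sum>l\<in>UNIV. (v j * x j) * (v l * x l))
       - N * (\<Sum>j\<in>UNIV. \<Sum>l\<in>UNIV. (v j * x j) * (u l * x l)) - N * (\<Sum>j\<in>UNIV. \<Sum>l\<in>UNIV. (u j * x j) * (v l * x l))"
      by (simp add: sum_subtractf sum_distrib_left)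
    also have "\<dots> = N * (2 * c * ((\<Sum>j\<in>UNIV. v j * x j) * (\<Sum>j\<in>UNIV. v j * x j))
       - 2 * ((\<Sum>j\<in>UNIV. u j * x j) * (\<Sum>j\<in>UNIV. v j * x j)))"
      unfolding sum_product[symmetric] by (simp add: algebra_simps)
    finally show ?thesis .
  qed
  define U where "U = (\<Sum>j\<in>UNIV. u j * u j)"
  have U0: "U \<ge> 0" unfolding U_def by (simp add: sum_nonneg)
  have ineq: "U * s \<le> c * s * s" for s
  proof -
    let ?x = "\<lambda>i. u i + s * v i"
    have vx: "(\<Sum>j\<in>UNIV. v j * ?x j) = s"
      using uv unit by (simp add: algebra_simps sum.distrib sum_distrib_left[symmetric])
    have ux: "(\<Sum>j\<in>UNIV. u j * ?x j) = U"
      using uv unfolding U_def by (simp add: algebra_simps sum.distrib sum_distrib_left[symmetric])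
    have "0 \<le> (\<Sum>j\<in>UNIV. \<Sum>l\<in>UNIV. (tr H * idf j l - N * H j l) * ?x j * ?x l)"
      using ps[unfolded psd_def, rule_format, of ?x] unfolding N_def by simp
    also have "\<dots> = N * (2 * c * (s * s) - 2 * (U * s))" unfolding quad vx ux ..
    finally have "0 \<le> N * (2 * (c * s * s - U * s))" by (simp add: algebra_simps)
    then have "0 \<le> c * s * s - U * s" using N0 by (simp add: zero_le_mult_iff)
    then show ?thesis by simp
  qed
  have Uz: "U = 0"
  proof (rule ccontr)
    assume "U \<noteq> 0"
    then have Up: "U > 0" using U0 by simp
    define s where "s = U / (\<bar>c\<bar> + 1)"
    have sp: "s > 0" unfolding s_def using Up by (simp add: add_pos_nonneg)
    have "U * s \<le> c * s * s" by (rule ineq)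
    then have "U \<le> c * s" using sp by (simp add: mult.commute mult_le_cancel_left_pos)
    also have "c * s \<le> \<bar>c\<bar> * s" using sp by (simp add: mult_right_mono)
    also have "\<bar>c\<bar> * s < (\<bar>c\<bar> + 1) * s" using sp by simp
    also have "(\<bar>c\<bar> + 1) * s = U" unfolding s_def by (simp add: add_pos_nonneg)
    finally show False by simp
  qed
  have u0: "u j = 0" for j
  proof -
    have "\<forall>j\<in>UNIV. u j * u j = 0"
      using Uz unfolding U_def by (subst sum_nonneg_eq_0_iff[symmetric]) auto
    then show ?thesis by simp
  qed
  have c0: "c \<ge> 0" using ineq[of 1] Uz by simp
  have "\<forall>j l. H j l = c * (idf j l - 2 * v j * v l)"
    using HF2 u0 by (simp add: idf_def algebra_simps)
  then show ?thesis using c0 by blast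
qed




theorem proposition2p3:
  fixes R :: "('n::finite) tensor4"
  assumes "CARD('n) \<ge> 5"
    and "R \<in> C_cone 1 0"
  shows "R \<in> PIC2 \<and>
    (\<forall>v::'n \<Rightarrow> real. (\<Sum>i\<in>UNIV. v i ^ 2) = 1 \<longrightarrow>
        (\<Sum>i\<in>UNIV. \<Sum>k\<in>UNIV. Ric R i k * v i * v k) = 0 \<longrightarrow>
        (\<exists>c::real. c \<ge> 0 \<and> R = (\<lambda>i j k l. c * (((\<lambda>a b. idf a b - 2 * v a * v b) \<odot> idf) i j k l))))"
proof -
  obtain S H where acS: "alg_curv S" and pS: "S \<in> PIC2" and r0: "Ric0 S = (\<lambda>i k. 0)"
    and symH: "sym_form H"
    and psH: "psd (\<lambda>i j. tr H * idf i j - (real (card (UNIV::'n set)) - 2 * 1) * H i j)"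
    and R_eq: "R = (\<lambda>i j k l. S i j k l + (H \<odot> idf) i j k l)"
    using assms(2) unfolding C_cone_def by blast
  have psH': "psd (\<lambda>i j. tr H * idf i j - (real CARD('n) - 2) * H i j)" using psH by simp
  have n3: "CARD('n) \<ge> 3" using assms(1) by simp
  have sH: "\<And>i j. H i j = H j i" using symH unfolding sym_form_def by blast
  have acK: "alg_curv (H \<odot> idf)" by (rule alg_curv_KN[OF symH])
  have acR: "alg_curv R" unfolding R_eq by (rule alg_curv_add[OF acS acK])
  have secS: "\<And>x y. sec S x y \<ge> 0" using pS by (rule sec_PIC2)
  have secK: "\<And>x y. sec (H \<odot> idf) x y \<ge> 0" by (rule sec_KN[OF symH n3 psH'])
  have part1: "R \<in> PIC2"
  proof -
    have "Im (curv_cx R z w) = 0 \<and> Re (curv_cx R z w) \<ge> 0" for z w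
    proof -
      have e: "curv_cx R z w = curv_cx S z w + curv_cx (H \<odot> idf) z w"
        unfolding R_eq by (rule curv_cx_add)
      have "Im (curv_cx S z w) = 0 \<and> Re (curv_cx S z w) \<ge> 0" using pS unfolding PIC2_def by blast
      moreover have "Im (curv_cx (H \<odot> idf) z w) = 0 \<and> Re (curv_cx (H \<odot> idf) z w) \<ge> 0"
        by (rule KN_pic2[OF symH n3 psH'])
      ultimately show ?thesis unfolding e by simp
    qed
    then show ?thesis unfolding PIC2_def using acR by blast
  qed
  have part2: "\<exists>c::real. c \<ge> 0 \<and> R = (\<lambda>i j k l. c * (((\<lambda>a b. idf a b - 2 * v a * v b) \<odot> idf) i j k l))"
    if unit0: "(\<Sum>i\<in>UNIV. v i ^ 2) = 1" and ric: "(\<Sum>i\<in>UNIV. \<Sum>k\<in>UNIV. Ric R i k * v i * v k) = 0" for v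
  proof -
    have unit: "(\<Sum>i\<in>UNIV. v i * v i) = 1" using unit0 by (simp add: power2_eq_square)
    have "ricq R v = ricq S v + ricq (H \<odot> idf) v" unfolding R_eq by (rule ricq_add)
    moreover have "ricq R v = 0" using ric unfolding ricq_def .
    moreover have "ricq S v \<ge> 0" by (rule ricq_nonneg[OF secS])
    moreover have "ricq (H \<odot> idf) v \<ge> 0" by (rule ricq_nonneg[OF secK])
    ultimately have rS: "ricq S v = 0" and rK: "ricq (H \<odot> idf) v = 0" by linarith+
    define a where "a = scal S / real CARD('n)"
    have RicS: "Ric S i k = a * idf i k" for i k
      using fun_cong[OF fun_cong[OF r0, of i], of k] unfolding Ric0_def a_def by simp
    have "ricq S v = (\<Sum>i\<in>UNIV. a * v i * v i)"
    proof -
      have "\<And>i. (\<Sum>k\<in>UNIV. Ric S i k * v i * v k) = a * v i * v i"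
      proof -
        fix i
        have "(\<Sum>k\<in>UNIV. Ric S i k * v i * v k) = (\<Sum>k\<in>UNIV. (a * v i * v k) * kd i k)"
          unfolding RicS idf_def by (simp add: mult_ac)
        then show "(\<Sum>k\<in>UNIV. Ric S i k * v i * v k) = a * v i * v i" by simp
      qed
      then show ?thesis unfolding ricq_def by simp
    qed
    also have "\<dots> = a" using unit by (simp add: sum_distrib_left[symmetric] mult.assoc)
    finally have a0: "a = 0" using rS by simp
    have RicS0: "Ric S i k = 0" for i k using RicS a0 by simp
    have BS0: "Bform S x j l = 0" for x j l
    proof (rule zero_form)
      show "\<And>j l. Bform S x j l = Bform S x l j" by (rule Bform_sym[OF acS])
      show "\<And>y. 0 \<le> (\<Sum>j\<in>UNIV. \<Sum>l\<in>UNIV. Bform S x j l * y j * y l)" unfolding Bform_quad by (rule secS)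
      show "(\<Sum>j\<in>UNIV. Bform S x j j) = 0" unfolding Bform_tr RicS0 by simp
    qed
    have S0: "S i j k l = 0" for i j k l by (rule tensor_zero[OF acS BS0])
    have BK0: "Bform (H \<odot> idf) v j l = 0" for j l
    proof (rule zero_form)
      show "\<And>j l. Bform (H \<odot> idf) v j l = Bform (H \<odot> idf) v l j" by (rule Bform_sym[OF acK])
      show "\<And>y. 0 \<le> (\<Sum>j\<in>UNIV. \<Sum>l\<in>UNIV. Bform (H \<odot> idf) v j l * y j * y l)" unfolding Bform_quad by (rule secK)
      show "(\<Sum>j\<in>UNIV. Bform (H \<odot> idf) v j j) = 0" unfolding Bform_tr using rK unfolding ricq_def .
    qed
    obtain c where c0: "c \<ge> 0" and Hc: "\<forall>j l. H j l = c * (idf j l - 2 * v j * v l)"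
      using H_rigid[OF sH n3 unit BK0 psH'] by blast
    have "R = (\<lambda>i j k l. c * (((\<lambda>a b. idf a b - 2 * v a * v b) \<odot> idf) i j k l))"
      unfolding R_eq fun_eq_iff S0 KN_def by (simp add: Hc algebra_simps)
    then show ?thesis using c0 by blast
  qed
  show ?thesis using part1 part2 by blast
qed


end
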